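(* Let $M$ be a colored dependency multigraph with $n$ nodes and $m$ edges (counted over all alternatives of all nodes) and with final node $F$. Then the multigraph collapse algorithm, run on $(M,F)$, terminates and runs in time $\mathcal{O}(d\cdot(n+m))$, where $d$ is the number of collapsed graphs (DAGs) it outputs.
   Context: A \emph{colored dependency multigraph} consists of a finite set $V$ of $n$ nodes (blocks), a distinguished final node $F\in V$, and for each node $v\in V$ a finite (possibly empty) list of \emph{alternatives} (colors). Each alternative of $v$ is a set of nodes on which $v$ depends, and an edge $(u,v)$ of a given color is present exactly when $u$ belongs to that alternative of $v$. The same pair of nodes may be joined by edges of several colors. A node with no alternatives has no dependencies. The graph obtained by following all edges of all colors is assumed acyclic. The total number of edges over all alternatives of all nodes is $m$. A node is \emph{branching} if it has at least two alternatives. Work in the standard RAM model. \textbf{DFS-Until.} Given a graph $G$ of this kind and the node $F$, DFS-Until performs a depth-first search backward from $F$. It follows each visited node's edges to its dependencies, visits each node at most once, and records the visited nodes together with their incoming dependency edges as a graph $D$. It halts and returns $(v,D)$ as soon as it visits a branching node $v$. If the search completes without visiting any branching node, it returns $(\mathrm{NULL},D)$. One call runs in time $\mathcal{O}(n+m)$. \textbf{Collapse algorithm.} Initialize an empty output list and a queue containing $M$. While the queue is nonempty: \begin{itemize} \item dequeue a graph $G$ and compute $(v,D)=\text{DFS-Until}(G,F)$; \item if $v=\mathrm{NULL}$, append $D$ to the output; \item otherwise, for each alternative $c$ of $v$ in $G$, enqueue a copy of $G$ in which $v$ keeps only alternative $c$ and the edges of all other alternatives of $v$ are deleted. \end{itemize}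 The output is a list of $d$ directed acyclic graphs. *)

theory Defs
  imports Main "HOL-Library.While_Combinator"
begin

text \<open>Nodes are 0..<n. A colored dependency multigraph is given by the list of
alternatives of each node; each alternative is a set of nodes on which the node depends.\<close>

type_synonym cgraph = "nat \<Rightarrow> nat set list"

definition dep_edges :: "cgraph \<Rightarrow> (nat \<times> nat) set" where
  "dep_edges G = {(u, v). \<exists>A \<in> set (G v). u \<in> A}"

definition wf_cdm :: "nat \<Rightarrow> nat \<Rightarrow> cgraph \<Rightarrow> bool" where
  "wf_cdm n F G \<longleftrightarrow> F < n \<and> (\<forall>v. n \<le> v \<longrightarrow> G v = [])
     \<and> (\<forall>v<n. \<forall>A \<in> set (G v). A \<subseteq> {..<n}) \<and> acyclic (dep_edges G)"

definition num_edges :: "nat \<Rightarrow> cgraph \<Rightarrow> nat" where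
  "num_edges n G = (\<Sum>v<n. \<Sum>A\<leftarrow>G v. card A)"

definition branching :: "cgraph \<Rightarrow> nat \<Rightarrow> bool" where
  "branching G v \<longleftrightarrow> 2 \<le> length (G v)"

text \<open>DFS-Until as a stack machine; dcost counts elementary operations
  (one per popped stack entry plus one per pushed dependency).\<close>
record dfs_state =
  stk :: "nat list"
  vis :: "nat set"
  dedges :: "(nat \<times> nat) set"
  found :: "nat option"
  dcost :: nat

definition dfs_step :: "cgraph \<Rightarrow> dfs_state \<Rightarrow> dfs_state" where
  "dfs_step G s = (case stk s of
      [] \<Rightarrow> s
    | v # rest \<Rightarrow>
        (if v \<in> vis s then s\<lparr>stk := rest, dcost := dcost s + 1\<rparr>
         else if branching G v then
           s\<lparr>stk := rest, vis := insert v (vis s), found := Some v, dcost := dcost s + 1\<rparr>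
         else
           (let ds = sorted_list_of_set (\<Union>(set (G v))) in
             s\<lparr>stk := ds @ rest, vis := insert v (vis s),
               dedges := dedges s \<union> {(u, v) | u. u \<in> \<Union>(set (G v))},
               dcost := dcost s + 1 + length ds\<rparr>)))"

definition dfs_until :: "cgraph \<Rightarrow> nat \<Rightarrow> dfs_state option" where
  "dfs_until G F = while_option (\<lambda>s. stk s \<noteq> [] \<and> found s = None) (dfs_step G)
      \<lparr>stk = [F], vis = {}, dedges = {}, found = None, dcost = 0\<rparr>"

text \<open>An output DAG D is recorded as (visited nodes, dependency edges).
  ccost: one unit per iteration, plus the cost of the DFS-Until call, plus one unit to append
  an output, plus the cost n + m(G) + 1 of each enqueued copy of G.\<close>
record col_state =
  queue :: "cgraph list"
  outp :: "(nat set \<times> (nat \<times> nat) set) list"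
  ccost :: nat

definition col_step :: "nat \<Rightarrow> nat \<Rightarrow> col_state \<Rightarrow> col_state option" where
  "col_step n F st = (case queue st of
      [] \<Rightarrow> Some st
    | G # rest \<Rightarrow>
        (case dfs_until G F of
           None \<Rightarrow> None
         | Some ds \<Rightarrow>
             (let c0 = ccost st + 1 + dcost ds in
              case found ds of
                None \<Rightarrow> Some (st\<lparr>queue := rest, outp := outp st @ [(vis ds, dedges ds)],
                                 ccost := c0 + 1\<rparr>)
              | Some v \<Rightarrow> Some (st\<lparr>queue := rest @ map (\<lambda>A. G(v := [A])) (G v),
                                 ccost := c0 + length (G v) * (n + num_edges n G + 1)\<rparr>))))"

text \<open>Result None means that the algorithm (or some inner DFS-Until call) does not terminate.\<close>
definition collapse :: "nat \<Rightarrow> nat \<Rightarrow> cgraph \<Rightarrow> col_state option" where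
  "collapse n F M =
     (case while_option (\<lambda>s. s \<noteq> None \<and> queue (the s) \<noteq> []) (\<lambda>s. col_step n F (the s))
             (Some \<lparr>queue = [M], outp = [], ccost = 0\<rparr>) of
        Some (Some st) \<Rightarrow> Some st
      | _ \<Rightarrow> None)"

end

theory Submission
  imports Defs
begin

definition gok :: "nat \<Rightarrow> cgraph \<Rightarrow> bool" where
  "gok n G \<longleftrightarrow> (\<forall>v. n \<le> v \<longrightarrow> G v = []) \<and> (\<forall>v<n. \<forall>A \<in> set (G v). A \<subseteq> {..<n})"

lemma card_Union_list: "card (\<Union>(set xs)) \<le> (\<Sum>A\<leftarrow>xs. card A)"
proof (induction xs)
  case Nil then show ?case by simp
next
  case (Cons a xs)
  have "card (\<Union>(set (a#xs))) \<le> card a + card (\<Union>(set xs))"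
    by (simp add: card_Un_le)
  with Cons show ?case by simp
qed

lemma gok_sub: "gok n G \<Longrightarrow> \<Union>(set (G v)) \<subseteq> {..<n}"
  unfolding gok_def by (cases "v < n") auto

lemma meas_lt: assumes "c < n" "a \<le> b + n" shows "(n - Suc c)*(n+1) + a < (n-c)*(n+1) + (b+1::nat)"
proof -
  obtain j where j: "n - c = Suc j" using assms(1) by (metis Suc_diff_Suc)
  then have "n - Suc c = j" by simp
  then show ?thesis using j assms(2) by simp
qed

definition dinv :: "nat \<Rightarrow> cgraph \<Rightarrow> dfs_state \<Rightarrow> bool" where
  "dinv n G s \<longleftrightarrow> set (stk s) \<subseteq> {..<n} \<and> vis s \<subseteq> {..<n} \<and>
     (\<forall>v. found s = Some v \<longrightarrow> v < n \<and> branching G v) \<and>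
     dcost s + length (stk s) \<le> 1 + 2 * (\<Sum>v\<in>vis s. card (\<Union>(set (G v))))"

lemma dinv_step:
  assumes g: "gok n G" and I: "dinv n G s" and ne: "stk s \<noteq> []" and nf: "found s = None"
  shows "dinv n G (dfs_step G s) \<and>
    (n - card (vis (dfs_step G s))) * (n+1) + length (stk (dfs_step G s))
      < (n - card (vis s)) * (n+1) + length (stk s)"
proof -
  obtain v rest where st: "stk s = v # rest" using ne by (cases "stk s") auto
  have vn: "v < n" using I st unfolding dinv_def by auto
  have fv: "finite (vis s)" using I unfolding dinv_def by (meson finite_lessThan finite_subset)
  show ?thesis
  proof (cases "v \<in> vis s")
    case True
    then show ?thesis using I st unfolding dfs_step_def dinv_def by auto
  next
    case nv: False
    have cv: "card (vis s) < n"
    proof -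
      have "insert v (vis s) \<subseteq> {..<n}" using I vn unfolding dinv_def by auto
      then have "card (insert v (vis s)) \<le> n" by (metis card_lessThan card_mono finite_lessThan)
      then show ?thesis using fv nv by simp
    qed
    have ci: "card (insert v (vis s)) = Suc (card (vis s))" using fv nv by simp
    have si: "(\<Sum>w\<in>insert v (vis s). card (\<Union>(set (G w)))) = card (\<Union>(set (G v))) + (\<Sum>w\<in>vis s. card (\<Union>(set (G w))))"
      using fv nv by simp
    show ?thesis
    proof (cases "branching G v")
      case True
      have m: "(n - Suc (card (vis s)))*(n+1) + length rest < (n - card (vis s))*(n+1) + (length rest+1)"
        by (rule meas_lt[OF cv]) simp
      then show ?thesis using True I st nv vn cv ci si unfolding dfs_step_def dinv_def by auto
    next
      case nb: False
      define U where "U = \<Union>(set (G v))"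
      have Us: "U \<subseteq> {..<n}" using gok_sub[OF g] U_def by auto
      have fU: "finite U" using Us finite_subset by blast
      have lU: "length (sorted_list_of_set U) = card U" by simp
      have sU: "set (sorted_list_of_set U) = U" using fU by simp
      have cU: "card U \<le> n" using Us by (metis card_lessThan card_mono finite_lessThan)
      have eq: "dfs_step G s = s\<lparr>stk := sorted_list_of_set U @ rest, vis := insert v (vis s),
               dedges := dedges s \<union> {(u, v) | u. u \<in> U},
               dcost := dcost s + 1 + card U\<rparr>"
        using st nv nb unfolding dfs_step_def U_def by (simp add: Let_def)
      have m: "(n - Suc (card (vis s))) * (n+1) + (card U + length rest) < (n - card (vis s)) * (n+1) + Suc (length rest)"
      proof -
        obtain j where j: "n - card (vis s) = Suc j" using cv by (metis Suc_diff_Suc)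
        then have "n - Suc (card (vis s)) = j" by simp
        then show ?thesis using j cU by simp
      qed
      show ?thesis unfolding eq using I st nv vn Us m ci si lU sU nf unfolding dinv_def U_def[symmetric]
        by auto
    qed
  qed
qed

lemma sum_vis_le:
  assumes "V \<subseteq> {..<n}"
  shows "(\<Sum>v\<in>V. card (\<Union>(set (G v)))) \<le> num_edges n G"
proof -
  have "(\<Sum>v\<in>V. card (\<Union>(set (G v)))) \<le> (\<Sum>v<n. card (\<Union>(set (G v))))"
    using assms by (intro sum_mono2) auto
  also have "\<dots> \<le> num_edges n G" unfolding num_edges_def
    by (intro sum_mono card_Union_list)
  finally show ?thesis .
qed

lemma dfs_ok:
  assumes g: "gok n G" and F: "F < n"
  shows "\<exists>ds. dfs_until G F = Some ds \<and> dcost ds \<le> 1 + 2 * num_edges n G \<and>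
     (\<forall>v. found ds = Some v \<longrightarrow> v < n \<and> branching G v)"
proof -
  let ?s0 = "\<lparr>stk = [F], vis = {}, dedges = {}, found = None, dcost = 0\<rparr>"
  have I0: "dinv n G ?s0" using F unfolding dinv_def by simp
  have "\<exists>t. dfs_until G F = Some t" unfolding dfs_until_def
    by (rule measure_while_option_Some[where P="dinv n G" and f="\<lambda>s. (n - card (vis s)) * (n+1) + length (stk s)"])
      (use dinv_step[OF g] I0 in auto)
  then obtain ds where ds: "dfs_until G F = Some ds" by blast
  have "dinv n G ds"
    by (rule while_option_rule[where P="dinv n G", OF _ ds[unfolded dfs_until_def]])
      (use dinv_step[OF g] I0 in auto)
  then have "dcost ds \<le> 1 + 2 * num_edges n G" "\<forall>v. found ds = Some v \<longrightarrow> v < n \<and> branching G v"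
    using sum_vis_le[of "vis ds" n G] unfolding dinv_def by auto
  with ds show ?thesis by blast
qed

definition qok :: "nat \<Rightarrow> nat \<Rightarrow> cgraph \<Rightarrow> bool" where
  "qok n m G \<longleftrightarrow> gok n G \<and> num_edges n G \<le> m"

definition PP :: "nat \<Rightarrow> cgraph \<Rightarrow> nat" where
  "PP n G = (\<Prod>w<n. max 1 (length (G w)))"

definition tG :: "nat \<Rightarrow> cgraph \<Rightarrow> nat" where
  "tG n G = 2 * PP n G - 1"

lemma child_gok:
  assumes "gok n G" "v < n" "A \<in> set (G v)"
  shows "gok n (G(v := [A]))"
  using assms unfolding gok_def by auto

lemma child_edges:
  assumes "A \<in> set (G v)"
  shows "num_edges n (G(v := [A])) \<le> num_edges n G"
  unfolding num_edges_def
proof (rule sum_mono)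
  fix w assume "w \<in> {..<n}"
  show "(\<Sum>B\<leftarrow>(G(v := [A])) w. card B) \<le> (\<Sum>B\<leftarrow>G w. card B)"
  proof (cases "w = v")
    case True
    have "card A \<in> set (map card (G v))" using assms by simp
    then have "card A \<le> (\<Sum>B\<leftarrow>G v. card B)" by (rule member_le_sum_list) auto
    then show ?thesis using True by simp
  qed simp
qed

lemma child_PP:
  assumes "v < n"
  shows "PP n (G(v := [A])) = (\<Prod>w\<in>{..<n}-{v}. max 1 (length (G w)))"
    and "PP n G = max 1 (length (G v)) * (\<Prod>w\<in>{..<n}-{v}. max 1 (length (G w)))"
proof -
  have f: "finite {..<n}" "v \<in> {..<n}" using assms by auto
  show "PP n (G(v := [A])) = (\<Prod>w\<in>{..<n}-{v}. max 1 (length (G w)))"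
    unfolding PP_def by (simp add: prod.remove[OF f])
  show "PP n G = max 1 (length (G v)) * (\<Prod>w\<in>{..<n}-{v}. max 1 (length (G w)))"
    unfolding PP_def by (simp add: prod.remove[OF f])
qed

lemma PP_pos: "1 \<le> (\<Prod>w\<in>S. max 1 (length ((G::cgraph) w)))"
  by (rule prod_ge_1) simp

definition cinv :: "nat \<Rightarrow> nat \<Rightarrow> col_state option \<Rightarrow> bool" where
  "cinv n m s \<longleftrightarrow> (\<exists>st. s = Some st \<and> (\<forall>G\<in>set (queue st). qok n m G) \<and>
     ccost st \<le> 14 * (n+m) * length (outp st) + 11 * (n+m) * length (queue st))"

definition cmeas :: "nat \<Rightarrow> col_state option \<Rightarrow> nat" where
  "cmeas n s = (case s of None \<Rightarrow> 0 | Some st \<Rightarrow> (\<Sum>G\<leftarrow>queue st. tG n G))"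

lemma arith_leaf:
  assumes "c \<le> 14 * K * oo + 11 * K * Suc q" "dc \<le> 1 + 2 * mG" "mG \<le> m" "K = n + m" "1 \<le> (n::nat)"
  shows "c + 1 + dc + 1 \<le> 14 * K * Suc oo + 11 * K * q"
proof -
  have "3 + 2 * m \<le> 3 * K" using assms by simp
  then show ?thesis using assms(1,2,3) by (simp add: algebra_simps)
qed

lemma arith_int:
  assumes "c \<le> 14 * K * oo + 11 * K * Suc q" "dc \<le> 1 + 2 * mG" "mG \<le> m" "K = n + m" "1 \<le> (n::nat)"
    "2 \<le> k"
  shows "c + 1 + dc + k * (n + mG + 1) \<le> 14 * K * oo + 11 * K * (q + k)"
proof -
  have a: "n + mG + 1 \<le> 2 * K" using assms by simp
  have b: "k * (n + mG + 1) \<le> k * (2 * K)" using a by (rule mult_le_mono2)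
  have c: "2 + 2 * m \<le> 2 * K" using assms by simp
  have d: "2 * K \<le> k * K" using assms(6) by (rule mult_le_mono1)
  obtain j where j: "k = j + 2" using assms(6) by (metis add.commute le_Suc_ex)
  have e: "3 * (k * K) \<le> 11 * K * (k - 1)" unfolding j by (simp add: algebra_simps)
  have "c + 1 + dc + k * (n + mG + 1) \<le> c + 2 * K + 2 * (k * K)" using b c d assms(2,3) by simp
  also have "\<dots> \<le> c + 3 * (k * K)" using d by simp
  also have "\<dots> \<le> c + 11 * K * (k - 1)" using e by simp
  also have "\<dots> \<le> 14 * K * oo + 11 * K * (q + k)" using assms(1,6) j by (simp add: algebra_simps)
  finally show ?thesis .
qed

lemma arith_meas:
  assumes "1 \<le> (p::nat)" "2 \<le> k"
  shows "k * (2 * p - 1) < 2 * (k * p) - 1"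
proof -
  obtain p' where p: "p = Suc p'" using assms(1) by (cases p) auto
  obtain j where j: "k = j + 2" using assms(2) by (metis add.commute le_Suc_ex)
  show ?thesis unfolding p j by (simp add: algebra_simps)
qed

lemma col_step_ok:
  assumes F: "F < n" and I: "cinv n m s" and b: "s \<noteq> None \<and> queue (the s) \<noteq> []"
  shows "cinv n m (col_step n F (the s)) \<and> cmeas n (col_step n F (the s)) < cmeas n s"
proof -
  obtain st where s: "s = Some st" and qk: "\<forall>G\<in>set (queue st). qok n m G"
    and cst: "ccost st \<le> 14 * (n+m) * length (outp st) + 11 * (n+m) * length (queue st)"
    using I unfolding cinv_def by blast
  obtain G rest where q: "queue st = G # rest" using b s by (cases "queue st") auto
  have qG: "qok n m G" using qk q by simp
  then have gG: "gok n G" and mG: "num_edges n G \<le> m" unfolding qok_def by auto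
  obtain ds where ds: "dfs_until G F = Some ds" and dc: "dcost ds \<le> 1 + 2 * num_edges n G"
    and fd: "\<forall>v. found ds = Some v \<longrightarrow> v < n \<and> branching G v"
    using dfs_ok[OF gG F] by blast
  have n1: "1 \<le> n" using F by simp
  have cst': "ccost st \<le> 14 * (n+m) * length (outp st) + 11 * (n+m) * Suc (length rest)"
    using cst q by simp
  show ?thesis
  proof (cases "found ds")
    case None
    have eq: "col_step n F (the s) = Some (st\<lparr>queue := rest, outp := outp st @ [(vis ds, dedges ds)],
                                 ccost := ccost st + 1 + dcost ds + 1\<rparr>)"
      using s q ds None unfolding col_step_def by simp
    have c: "ccost st + 1 + dcost ds + 1 \<le> 14 * (n+m) * Suc (length (outp st)) + 11 * (n+m) * length rest"
      by (rule arith_leaf[OF cst' dc mG refl n1])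
    have t: "1 \<le> tG n G" unfolding tG_def PP_def using PP_pos[where S="{..<n}" and G=G] by simp
    show ?thesis unfolding eq using c qk q s t unfolding cinv_def cmeas_def by auto
  next
    case (Some v)
    have vn: "v < n" and br: "2 \<le> length (G v)" using fd Some unfolding branching_def by auto
    define k where "k = length (G v)"
    define p where "p = (\<Prod>w\<in>{..<n}-{v}. max 1 (length (G w)))"
    have p1: "1 \<le> p" unfolding p_def by (rule PP_pos)
    have eq: "col_step n F (the s) = Some (st\<lparr>queue := rest @ map (\<lambda>A. G(v := [A])) (G v),
                                 ccost := ccost st + 1 + dcost ds + length (G v) * (n + num_edges n G + 1)\<rparr>)"
      using s q ds Some unfolding col_step_def by simp
    have c: "ccost st + 1 + dcost ds + k * (n + num_edges n G + 1) \<le> 14 * (n+m) * length (outp st) + 11 * (n+m) * (length rest + k)"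
      by (rule arith_int[OF cst' dc mG refl n1]) (use br k_def in simp)
    have qn: "\<forall>H\<in>set (map (\<lambda>A. G(v := [A])) (G v)). qok n m H"
      using child_gok[OF gG vn] child_edges[of _ G v n] mG unfolding qok_def by fastforce
    have tc: "(\<Sum>H\<leftarrow>map (\<lambda>A. G(v := [A])) (G v). tG n H) = k * (2 * p - 1)"
    proof -
      have "map (tG n) (map (\<lambda>A. G(v := [A])) (G v)) = map (\<lambda>A. 2 * p - 1) (G v)"
        unfolding map_map by (rule map_cong[OF refl]) (simp add: child_PP(1)[OF vn] tG_def p_def)
      then have "(\<Sum>H\<leftarrow>map (\<lambda>A. G(v := [A])) (G v). tG n H) = (\<Sum>A\<leftarrow>G v. 2 * p - 1)"
        by (simp only:)
      also have "\<dots> = k * (2 * p - 1)" unfolding k_def by (simp add: sum_list_triv)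
      finally show ?thesis .
    qed
    have tGG: "tG n G = 2 * (k * p) - 1"
      using child_PP(2)[OF vn, of G] br unfolding tG_def p_def k_def by simp
    have lt: "k * (2 * p - 1) < 2 * (k * p) - 1" using arith_meas[OF p1] br k_def by simp
    show ?thesis unfolding eq using c qk q s qn tc tGG lt unfolding cinv_def cmeas_def k_def
      by auto
  qed
qed

theorem mainTheorem1:
  "\<exists>C::nat. \<forall>n F M. wf_cdm n F M \<longrightarrow>
     (\<exists>st. collapse n F M = Some st \<and>
           ccost st \<le> C * length (outp st) * (n + num_edges n M))"
proof (rule exI[of _ 14], intro allI impI)
  fix n F M assume w: "wf_cdm n F M"
  define m where "m = num_edges n M"
  have F: "F < n" using w unfolding wf_cdm_def by simp
  have qM: "qok n m M" using w unfolding wf_cdm_def qok_def gok_def m_def by simp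
  let ?b = "\<lambda>s. s \<noteq> None \<and> queue (the s) \<noteq> []"
  let ?c = "\<lambda>s. col_step n F (the s)"
  let ?s0 = "Some \<lparr>queue = [M], outp = [], ccost = 0\<rparr>"
  have I0: "cinv n m ?s0" using qM unfolding cinv_def by simp
  have "\<exists>t. while_option ?b ?c ?s0 = Some t"
    by (rule measure_while_option_Some[where P="cinv n m" and f="cmeas n"])
      (use col_step_ok[OF F] I0 in auto)
  then obtain t where t: "while_option ?b ?c ?s0 = Some t" by blast
  have It: "cinv n m t"
    by (rule while_option_rule[where P="cinv n m", OF _ t]) (use col_step_ok[OF F] I0 in auto)
  have nb: "\<not> ?b t" using while_option_stop[OF t] .
  obtain st where st: "t = Some st" and cs: "ccost st \<le> 14 * (n+m) * length (outp st) + 11 * (n+m) * length (queue st)"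
    using It unfolding cinv_def by blast
  have "queue st = []" using nb st by simp
  then have cs2: "ccost st \<le> 14 * length (outp st) * (n + m)" using cs by (simp add: algebra_simps)
  have "collapse n F M = Some st" unfolding collapse_def using t st by simp
  then show "\<exists>st. collapse n F M = Some st \<and> ccost st \<le> 14 * length (outp st) * (n + num_edges n M)"
    using cs2 m_def by blast
qed

end
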